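(* Let $N$ be a network with $n$ boundary vertices and excedance $k$, let $r\ge1$ and $\lambda$ with $0\le\lambda_i\le r$, $\sum\lambda_i=kr$. Let $\mathcal S=(S_1,\dots,S_n)$ be a list of boundary label subsets and let $\mathcal I=(I_1,\dots,I_r)$ be the dual list, $I_i=\{j\in[n]: i\in S_j\}$ (so $|I_i|=k$ and the multiset union of the $I_i$ is $\{1^{\lambda_1},\dots,n^{\lambda_n}\}$). Then $$\Delta_{I_1}(N)\Delta_{I_2}(N)\cdots\Delta_{I_r}(N)=\mathrm{sign}(\mathcal S)\,\mathrm{Web}_r(N;\lambda)(E_{\mathcal S}).$$
   Context: Networks. A planar bipartite graph in the disk is a graph $G$ embedded in a closed disk, vertices colored black or white, every edge joining opposite colors; $n$ boundary vertices labeled $1,\dots,n$ counterclockwise, all black, the $i$-th incident to at most one edge $b_i$; others interior. A network $N$ is such a $G$ with edge weights $\mathrm{wt}(e)\in\mathbb C^\times$. An almost perfect matching $\pi$ uses every interior vertex exactly once and each boundary vertex at most once; $\partial(\pi)$ is the set of boundary vertices used; $\mathrm{wt}(\pi)=\prod_{e\in\pi}\mathrm{wt}(e)$; excedance $k=|\partial(\pi)|$ = #interior white − #interior black vertices; $N$ is assumed to have an almost perfect matching. $\Delta_I(N)=\sum_{\partial(\pi)=I}\mathrm{wt}(\pi)$. Tensors. $U=\mathbb C^r$, basis $E_1,\dots,E_r$, $E_1\wedge\cdots\wedge E_r=1$. $\mathcal W_\lambda(U)=\mathrm{Hom}_{SL(U)}(\bigotimes_i\bigwedge^{\lambda_i}U,\mathbb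 C)$. $E_S$ = wedge of $E_i$, $i\in S$, increasingly. Boundary label subsets: $\mathcal S=(S_1,\dots,S_n)$, $|S_j|=\lambda_j$, multiset union $\{1^k,\dots,r^k\}$; $E_{\mathcal S}=E_{S_1}\otimes\cdots\otimes E_{S_n}$; $\mathrm{sign}(\mathcal S)=(-1)^{\mathrm{inv}}$, $\mathrm{inv}$ = inversions of the word listing $S_1$ increasingly, then $S_2$, etc. Weblike subgraphs: multiplicities $m(e)\in\{0,\dots,r\}$ on edges of $G$ summing to $r$ at each interior vertex; degree $\lambda(W)=(m(b_1),\dots,m(b_n))$; $\mathrm{wt}(W)=\prod_e\mathrm{wt}(e)^{m(e)}$. Consistent labeling: sets $S(e)\subset[r]$, $|S(e)|=m(e)$, pairwise disjoint at each interior vertex; $a(\mathcal S;W)$ = number with $S(b_j)=S_j$. $\mathbf W\in\mathcal W_\lambda(U)$ is the unique invariant with $\mathbf W(E_{\mathcal S})=\mathrm{sign}(\mathcal S)a(\mathcal S;W)$ for all $\mathcal S$. $\mathrm{Web}_r(N;\lambda)=\sum_{\lambda(W)=\lambda}\mathrm{wt}(W)\mathbf W$. *)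

theory Defs
  imports Complex_Main
begin

text \<open>Edges are abstract (parallel edges
allowed); each edge e joins its black endpoint bend e to its white endpoint wend e.  The embedding in the disk is not
modelled.\<close>

record ('v, 'e) bgraph =
  verts  :: "'v set"
  blacks :: "'v set"
  whites :: "'v set"
  edges  :: "'e set"
  bend   :: "'e \<Rightarrow> 'v"
  wend   :: "'e \<Rightarrow> 'v"
  bdry   :: "nat \<Rightarrow> 'v"
  nbd    :: nat

definition incident :: "('v, 'e) bgraph \<Rightarrow> 'e \<Rightarrow> 'v \<Rightarrow> bool" where
  "incident G e v \<longleftrightarrow> bend G e = v \<or> wend G e = v"

definition bdry_verts :: "('v, 'e) bgraph \<Rightarrow> 'v set" where
  "bdry_verts G = bdry G ` {1..nbd G}"

definition interior :: "('v, 'e) bgraph \<Rightarrow> 'v set" where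
  "interior G = verts G - bdry_verts G"

definition inc_edges :: "('v, 'e) bgraph \<Rightarrow> 'v \<Rightarrow> 'e set" where
  "inc_edges G v = {e \<in> edges G. incident G e v}"

definition almost_pm :: "('v, 'e) bgraph \<Rightarrow> 'e set \<Rightarrow> bool" where
  "almost_pm G \<pi> \<longleftrightarrow> \<pi> \<subseteq> edges G
     \<and> (\<forall>v \<in> interior G. card {e \<in> \<pi>. incident G e v} = 1)
     \<and> (\<forall>j \<in> {1..nbd G}. card {e \<in> \<pi>. incident G e (bdry G j)} \<le> 1)"

definition pm_boundary :: "('v, 'e) bgraph \<Rightarrow> 'e set \<Rightarrow> nat set" where
  "pm_boundary G \<pi> = {j \<in> {1..nbd G}. \<exists>e \<in> \<pi>. incident G e (bdry G j)}"

definition network :: "('v, 'e) bgraph \<Rightarrow> ('e \<Rightarrow> complex) \<Rightarrow> bool" where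
  "network G wt \<longleftrightarrow>
     finite (verts G) \<and> finite (edges G)
     \<and> blacks G \<union> whites G = verts G \<and> blacks G \<inter> whites G = {}
     \<and> (\<forall>e \<in> edges G. bend G e \<in> blacks G \<and> wend G e \<in> whites G)
     \<and> bdry_verts G \<subseteq> blacks G \<and> inj_on (bdry G) {1..nbd G}
     \<and> (\<forall>j \<in> {1..nbd G}. card (inc_edges G (bdry G j)) \<le> 1)
     \<and> (\<forall>e \<in> edges G. wt e \<noteq> 0)
     \<and> (\<exists>\<pi>. almost_pm G \<pi>)"

definition excedance :: "('v, 'e) bgraph \<Rightarrow> int" where
  "excedance G = int (card (whites G \<inter> interior G)) - int (card (blacks G \<inter> interior G))"

definition Delta :: "('v, 'e) bgraph \<Rightarrow> ('e \<Rightarrow> complex) \<Rightarrow> nat set \<Rightarrow> complex" where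
  "Delta G wt I = (\<Sum>\<pi> \<in> {\<pi>. almost_pm G \<pi> \<and> pm_boundary G \<pi> = I}. \<Prod>e \<in> \<pi>. wt e)"

text \<open>Weblike subgraphs (multiplicity functions, zero off the edge set).\<close>
definition weblike :: "nat \<Rightarrow> ('v, 'e) bgraph \<Rightarrow> ('e \<Rightarrow> nat) \<Rightarrow> bool" where
  "weblike r G m \<longleftrightarrow> (\<forall>e. e \<notin> edges G \<longrightarrow> m e = 0) \<and> (\<forall>e. m e \<le> r)
     \<and> (\<forall>v \<in> interior G. (\<Sum>e \<in> inc_edges G v. m e) = r)"

text \<open>m(b_j): the multiplicity of the (at most one) edge at boundary vertex j (0 if none).\<close>
definition web_degree :: "('v, 'e) bgraph \<Rightarrow> ('e \<Rightarrow> nat) \<Rightarrow> nat \<Rightarrow> nat" where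
  "web_degree G m j = (\<Sum>e \<in> inc_edges G (bdry G j). m e)"

definition web_wt :: "('v, 'e) bgraph \<Rightarrow> ('e \<Rightarrow> complex) \<Rightarrow> ('e \<Rightarrow> nat) \<Rightarrow> complex" where
  "web_wt G wt m = (\<Prod>e \<in> edges G. wt e ^ m e)"

definition consistent_labeling ::
    "nat \<Rightarrow> ('v, 'e) bgraph \<Rightarrow> ('e \<Rightarrow> nat) \<Rightarrow> ('e \<Rightarrow> nat set) \<Rightarrow> bool" where
  "consistent_labeling r G m L \<longleftrightarrow>
     (\<forall>e. e \<notin> edges G \<longrightarrow> L e = {})
     \<and> (\<forall>e \<in> edges G. L e \<subseteq> {1..r} \<and> card (L e) = m e)
     \<and> (\<forall>v \<in> interior G. \<forall>e \<in> inc_edges G v. \<forall>e' \<in> inc_edges G v.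
           e \<noteq> e' \<longrightarrow> L e \<inter> L e' = {})"

definition a_count :: "nat \<Rightarrow> ('v, 'e) bgraph \<Rightarrow> (nat \<Rightarrow> nat set) \<Rightarrow> ('e \<Rightarrow> nat) \<Rightarrow> nat" where
  "a_count r G S m = card {L. consistent_labeling r G m L
      \<and> (\<forall>j \<in> {1..nbd G}. (\<Union>e \<in> inc_edges G (bdry G j). L e) = S j)}"

definition label_word :: "nat \<Rightarrow> (nat \<Rightarrow> nat set) \<Rightarrow> nat list" where
  "label_word n S = concat (map (\<lambda>j. sorted_list_of_set (S j)) [1..<n+1])"

definition inversions :: "nat list \<Rightarrow> nat" where
  "inversions w = card {(p, q). p < q \<and> q < length w \<and> w ! q < w ! p}"

definition sign_labels :: "nat \<Rightarrow> (nat \<Rightarrow> nat set) \<Rightarrow> complex" where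
  "sign_labels n S = (-1) ^ inversions (label_word n S)"

definition boundary_labels :: "nat \<Rightarrow> nat \<Rightarrow> nat \<Rightarrow> (nat \<Rightarrow> nat) \<Rightarrow> (nat \<Rightarrow> nat set) \<Rightarrow> bool" where
  "boundary_labels n r k lam S \<longleftrightarrow>
     (\<forall>j \<in> {1..n}. S j \<subseteq> {1..r} \<and> card (S j) = lam j)
     \<and> (\<forall>i \<in> {1..r}. card {j \<in> {1..n}. i \<in> S j} = k)"

text \<open>Value of the web invariant bold W on the basis tensor E_S, for boundary label
subsets S: by definition of bold W it equals sign(S) a(S;W).\<close>
definition web_inv_value :: "nat \<Rightarrow> ('v, 'e) bgraph \<Rightarrow> ('e \<Rightarrow> nat) \<Rightarrow> (nat \<Rightarrow> nat set) \<Rightarrow> complex" where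
  "web_inv_value r G m S = sign_labels (nbd G) S * of_nat (a_count r G S m)"

definition Web_eval :: "nat \<Rightarrow> ('v, 'e) bgraph \<Rightarrow> ('e \<Rightarrow> complex) \<Rightarrow> (nat \<Rightarrow> nat)
     \<Rightarrow> (nat \<Rightarrow> nat set) \<Rightarrow> complex" where
  "Web_eval r G wt lam S =
     (\<Sum>m \<in> {m. weblike r G m \<and> (\<forall>j \<in> {1..nbd G}. web_degree G m j = lam j)}.
        web_wt G wt m * web_inv_value r G m S)"

definition dual_list :: "nat \<Rightarrow> (nat \<Rightarrow> nat set) \<Rightarrow> nat \<Rightarrow> nat set" where
  "dual_list n S i = {j \<in> {1..n}. i \<in> S j}"

end

theory Submission imports Defs "HOL-Library.FuncSet" begin

context
  fixes G :: "('v, 'e) bgraph" and wt :: "'e \<Rightarrow> complex"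
    and r k :: nat and lam :: "nat \<Rightarrow> nat" and S :: "nat \<Rightarrow> nat set"
  assumes net: "network G wt"
    and bl: "boundary_labels (nbd G) r k lam S"
begin

lemma finE: "finite (edges G)" using net by (simp add: network_def)

lemma inc_sub: "inc_edges G v \<subseteq> edges G" by (auto simp: inc_edges_def)

lemma fin_inc: "finite (inc_edges G v)" using finE inc_sub finite_subset by blast

lemma inc_le1: "j \<in> {1..nbd G} \<Longrightarrow> e \<in> inc_edges G (bdry G j) \<Longrightarrow> e' \<in> inc_edges G (bdry G j) \<Longrightarrow> e = e'"
proof -
  assume j: "j \<in> {1..nbd G}" and a: "e \<in> inc_edges G (bdry G j)" "e' \<in> inc_edges G (bdry G j)"
  have "card (inc_edges G (bdry G j)) \<le> Suc 0" using net j by (simp add: network_def)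
  then show "e = e'" using a card_le_Suc0_iff_eq[OF fin_inc] by blast
qed

lemma S_sub: "j \<in> {1..nbd G} \<Longrightarrow> S j \<subseteq> {1..r}" using bl by (simp add: boundary_labels_def)
lemma S_card: "j \<in> {1..nbd G} \<Longrightarrow> card (S j) = lam j" using bl by (simp add: boundary_labels_def)

definition AA :: "nat \<Rightarrow> 'e set set" where
  "AA i = {\<pi>. almost_pm G \<pi> \<and> pm_boundary G \<pi> = dual_list (nbd G) S i}"

definition phi :: "(nat \<Rightarrow> 'e set) \<Rightarrow> 'e \<Rightarrow> nat set" where
  "phi p = (\<lambda>e. {i \<in> {1..r}. e \<in> p i})"

lemma match_to_lab:
  assumes p: "p \<in> PiE {1..r} AA"
  shows "consistent_labeling r G (\<lambda>e. card (phi p e)) (phi p)"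
    and "weblike r G (\<lambda>e. card (phi p e))"
    and "\<forall>j \<in> {1..nbd G}. (\<Union>e \<in> inc_edges G (bdry G j). phi p e) = S j"
    and "\<forall>j \<in> {1..nbd G}. web_degree G (\<lambda>e. card (phi p e)) j = lam j"
proof -
  have pE: "\<And>i. i \<in> {1..r} \<Longrightarrow> p i \<subseteq> edges G"
    using p by (auto simp: AA_def almost_pm_def PiE_def Pi_def)
  have pint: "\<And>i v. i \<in> {1..r} \<Longrightarrow> v \<in> interior G \<Longrightarrow> card {e \<in> p i. incident G e v} = 1"
    using p by (auto simp: AA_def almost_pm_def PiE_def Pi_def)
  have pbd: "\<And>i. i \<in> {1..r} \<Longrightarrow> pm_boundary G (p i) = dual_list (nbd G) S i"
    using p by (auto simp: AA_def PiE_def Pi_def)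
  have off: "\<And>e. e \<notin> edges G \<Longrightarrow> phi p e = {}" using pE by (auto simp: phi_def)
  have sub: "\<And>e. phi p e \<subseteq> {1..r}" by (auto simp: phi_def)
  have disj: "\<forall>v \<in> interior G. \<forall>e \<in> inc_edges G v. \<forall>e' \<in> inc_edges G v.
           e \<noteq> e' \<longrightarrow> phi p e \<inter> phi p e' = {}"
  proof (intro ballI impI)
    fix v e e' assume v: "v \<in> interior G" and e: "e \<in> inc_edges G v" and e': "e' \<in> inc_edges G v" and ne: "e \<noteq> e'"
    show "phi p e \<inter> phi p e' = {}"
    proof (rule ccontr)
      assume "phi p e \<inter> phi p e' \<noteq> {}"
      then obtain i where i: "i \<in> {1..r}" "e \<in> p i" "e' \<in> p i" by (auto simp: phi_def)
      have "card {x \<in> p i. incident G x v} = 1" using pint i v by blast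
      then obtain x where "{x \<in> p i. incident G x v} = {x}" by (rule card_1_singletonE)
      moreover have "e \<in> {x \<in> p i. incident G x v}" "e' \<in> {x \<in> p i. incident G x v}"
        using i e e' by (auto simp: inc_edges_def)
      ultimately have "e = x" "e' = x" by (metis singletonD)+
      then show False using ne by simp
    qed
  qed
  show cl: "consistent_labeling r G (\<lambda>e. card (phi p e)) (phi p)"
    unfolding consistent_labeling_def using off sub disj by blast
  have sumr: "(\<Sum>e \<in> inc_edges G v. card (phi p e)) = r" if v: "v \<in> interior G" for v
  proof -
    have "(\<Sum>e \<in> inc_edges G v. card (phi p e))
        = (\<Sum>e \<in> inc_edges G v. \<Sum>i\<in>{1..r}. if e \<in> p i then 1 else 0)"
      by (simp add: phi_def sum.inter_filter[symmetric])
    also have "\<dots> = (\<Sum>i\<in>{1..r}. \<Sum>e \<in> inc_edges G v. if e \<in> p i then 1 else 0)"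
      by (rule sum.swap)
    also have "\<dots> = (\<Sum>i\<in>{1..r}. card {e \<in> inc_edges G v. e \<in> p i})"
      by (simp add: sum.inter_filter[symmetric] fin_inc)
    also have "\<dots> = (\<Sum>i\<in>{1..r}. (1::nat))"
    proof (rule sum.cong[OF refl])
      fix i assume i: "i \<in> {1..r}"
      have "{e \<in> inc_edges G v. e \<in> p i} = {e \<in> p i. incident G e v}"
        using pE[OF i] by (auto simp: inc_edges_def)
      then show "card {e \<in> inc_edges G v. e \<in> p i} = 1" using pint[OF i v] by simp
    qed
    finally show ?thesis by simp
  qed
  show "weblike r G (\<lambda>e. card (phi p e))"
    unfolding weblike_def using off sumr card_mono[OF _ sub] by auto
  have un: "(\<Union>e \<in> inc_edges G (bdry G j). phi p e) = S j" if j: "j \<in> {1..nbd G}" for j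
  proof -
    have "(\<Union>e \<in> inc_edges G (bdry G j). phi p e) = {i \<in> {1..r}. \<exists>e \<in> p i. incident G e (bdry G j)}"
      using pE by (auto simp: phi_def inc_edges_def)
    also have "\<dots> = {i \<in> {1..r}. j \<in> pm_boundary G (p i)}"
      using j by (auto simp: pm_boundary_def)
    also have "\<dots> = {i \<in> {1..r}. i \<in> S j}"
      using pbd j by (auto simp: dual_list_def)
    also have "\<dots> = S j" using S_sub[OF j] by auto
    finally show ?thesis .
  qed
  then show "\<forall>j \<in> {1..nbd G}. (\<Union>e \<in> inc_edges G (bdry G j). phi p e) = S j" by blast
  show "\<forall>j \<in> {1..nbd G}. web_degree G (\<lambda>e. card (phi p e)) j = lam j"
  proof
    fix j assume j: "j \<in> {1..nbd G}"
    have "web_degree G (\<lambda>e. card (phi p e)) j = card (\<Union>e \<in> inc_edges G (bdry G j). phi p e)"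
      unfolding web_degree_def
      by (rule card_UN_disjoint[symmetric]) (use fin_inc inc_le1[OF j] in \<open>auto simp: phi_def\<close>)
    also have "\<dots> = lam j" using un[OF j] S_card[OF j] by simp
    finally show "web_degree G (\<lambda>e. card (phi p e)) j = lam j" .
  qed
qed

lemma lab_to_match:
  assumes wl: "weblike r G m" and cl: "consistent_labeling r G m L"
    and bd: "\<forall>j \<in> {1..nbd G}. (\<Union>e \<in> inc_edges G (bdry G j). L e) = S j"
  defines "p \<equiv> (\<lambda>i \<in> {1..r}. {e \<in> edges G. i \<in> L e})"
  shows "p \<in> PiE {1..r} AA" and "phi p = L"
proof -
  have off: "\<And>e. e \<notin> edges G \<Longrightarrow> L e = {}" using cl by (simp add: consistent_labeling_def)
  have sub: "\<And>e. e \<in> edges G \<Longrightarrow> L e \<subseteq> {1..r}" using cl by (simp add: consistent_labeling_def)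
  have cm: "\<And>e. e \<in> edges G \<Longrightarrow> card (L e) = m e" using cl by (simp add: consistent_labeling_def)
  have disj: "\<And>v e e'. v \<in> interior G \<Longrightarrow> e \<in> inc_edges G v \<Longrightarrow> e' \<in> inc_edges G v \<Longrightarrow>
           e \<noteq> e' \<Longrightarrow> L e \<inter> L e' = {}" using cl by (simp add: consistent_labeling_def)
  show "phi p = L"
  proof
    fix e show "phi p e = L e"
    proof -
      have "phi p e = {i \<in> {1..r}. e \<in> edges G \<and> i \<in> L e}" by (auto simp: phi_def p_def)
      also have "\<dots> = L e"
      proof (cases "e \<in> edges G")
        case True then show ?thesis using sub[OF True] by blast
      next
        case False then show ?thesis using off[OF False] by blast
      qed
      finally show ?thesis .
    qed
  qed
  have cover: "\<exists>e \<in> inc_edges G v. i \<in> L e" if v: "v \<in> interior G" and i: "i \<in> {1..r}" for v i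
  proof -
    have "card (\<Union>e \<in> inc_edges G v. L e) = (\<Sum>e \<in> inc_edges G v. card (L e))"
    proof (rule card_UN_disjoint[OF fin_inc])
      show "\<forall>e\<in>inc_edges G v. finite (L e)"
        using sub inc_sub by (meson finite_atLeastAtMost finite_subset subsetD)
      show "\<forall>e\<in>inc_edges G v. \<forall>e'\<in>inc_edges G v. e \<noteq> e' \<longrightarrow> L e \<inter> L e' = {}"
        using disj[OF v] by blast
    qed
    also have "\<dots> = (\<Sum>e \<in> inc_edges G v. m e)" using cm inc_sub by (auto intro: sum.cong)
    also have "\<dots> = r" using wl v by (simp add: weblike_def)
    finally have c: "card (\<Union>e \<in> inc_edges G v. L e) = card {1..r}" by simp
    have "(\<Union>e \<in> inc_edges G v. L e) \<subseteq> {1..r}" using sub inc_sub by blast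
    then have "(\<Union>e \<in> inc_edges G v. L e) = {1..r}" using card_subset_eq[OF _ _ c] by simp
    then show ?thesis using i by blast
  qed
  show "p \<in> PiE {1..r} AA"
  proof (rule PiE_I)
    fix i assume i: "i \<in> {1..r}"
    have pi: "p i = {e \<in> edges G. i \<in> L e}" using i by (simp add: p_def)
    have apm: "almost_pm G (p i)"
      unfolding almost_pm_def
    proof (intro conjI ballI)
      show "p i \<subseteq> edges G" using pi by auto
    next
      fix v assume v: "v \<in> interior G"
      obtain e where e: "e \<in> inc_edges G v" "i \<in> L e" using cover[OF v i] by blast
      have "{x \<in> p i. incident G x v} = {e}"
      proof
        show "{e} \<subseteq> {x \<in> p i. incident G x v}" using e pi by (auto simp: inc_edges_def)
        show "{x \<in> p i. incident G x v} \<subseteq> {e}"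
        proof
          fix x assume x: "x \<in> {x \<in> p i. incident G x v}"
          then have "x \<in> inc_edges G v" "i \<in> L x" using pi by (auto simp: inc_edges_def)
          then show "x \<in> {e}" using disj[OF v e(1)] e by blast
        qed
      qed
      then show "card {x \<in> p i. incident G x v} = 1" by simp
    next
      fix j assume j: "j \<in> {1..nbd G}"
      have "{x \<in> p i. incident G x (bdry G j)} \<subseteq> inc_edges G (bdry G j)"
        using pi by (auto simp: inc_edges_def)
      moreover have "card (inc_edges G (bdry G j)) \<le> 1" using net j by (simp add: network_def)
      ultimately show "card {x \<in> p i. incident G x (bdry G j)} \<le> 1"
        by (meson card_mono fin_inc le_trans)
    qed
    have "pm_boundary G (p i) = {j \<in> {1..nbd G}. i \<in> (\<Union>e \<in> inc_edges G (bdry G j). L e)}"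
      using pi by (auto simp: pm_boundary_def inc_edges_def)
    also have "\<dots> = dual_list (nbd G) S i" unfolding dual_list_def
    proof (rule Collect_cong)
      fix j
      show "(j \<in> {1..nbd G} \<and> i \<in> (\<Union>e \<in> inc_edges G (bdry G j). L e)) = (j \<in> {1..nbd G} \<and> i \<in> S j)"
      proof (cases "j \<in> {1..nbd G}")
        case True then show ?thesis using bd by simp
      next
        case False then show ?thesis by (simp only: False simp_thms)
      qed
    qed
    finally show "p i \<in> AA i" using apm by (simp add: AA_def)
  next
    fix i assume "i \<notin> {1..r}" then show "p i = undefined" unfolding p_def by (metis restrict_apply)
  qed
qed

lemma pE_gen: "p \<in> PiE {1..r} AA \<Longrightarrow> i \<in> {1..r} \<Longrightarrow> p i \<subseteq> edges G"
  by (auto simp: AA_def almost_pm_def PiE_def Pi_def)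

lemma weight:
  assumes p: "p \<in> PiE {1..r} AA"
  shows "(\<Prod>i\<in>{1..r}. \<Prod>e\<in>p i. wt e) = (\<Prod>e\<in>edges G. wt e ^ card (phi p e))"
proof -
  have "(\<Prod>i\<in>{1..r}. \<Prod>e\<in>p i. wt e) = (\<Prod>i\<in>{1..r}. \<Prod>e\<in>edges G. if e \<in> p i then wt e else 1)"
  proof (rule prod.cong[OF refl])
    fix i assume i: "i \<in> {1..r}"
    have "p i = {e \<in> edges G. e \<in> p i}" using pE_gen[OF p i] by blast
    then have "(\<Prod>e\<in>p i. wt e) = (\<Prod>e\<in>{e \<in> edges G. e \<in> p i}. wt e)" by simp
    also have "\<dots> = (\<Prod>e\<in>edges G. if e \<in> p i then wt e else 1)"
      by (rule prod.inter_filter[OF finE])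
    finally show "(\<Prod>e\<in>p i. wt e) = (\<Prod>e\<in>edges G. if e \<in> p i then wt e else 1)" .
  qed
  also have "\<dots> = (\<Prod>e\<in>edges G. \<Prod>i\<in>{1..r}. if e \<in> p i then wt e else 1)"
    by (rule prod.swap)
  also have "\<dots> = (\<Prod>e\<in>edges G. wt e ^ card (phi p e))"
  proof (rule prod.cong[OF refl])
    fix e
    have "(\<Prod>i\<in>{1..r}. if e \<in> p i then wt e else 1) = (\<Prod>i\<in>{i \<in> {1..r}. e \<in> p i}. wt e)"
      by (rule prod.inter_filter[symmetric]) simp
    also have "\<dots> = wt e ^ card (phi p e)" by (simp add: phi_def)
    finally show "(\<Prod>i\<in>{1..r}. if e \<in> p i then wt e else 1) = wt e ^ card (phi p e)" .
  qed
  finally show ?thesis .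
qed

lemma inj_phi: "inj_on phi (PiE {1..r} AA)"
proof (rule inj_onI)
  fix p q assume p: "p \<in> PiE {1..r} AA" and q: "q \<in> PiE {1..r} AA" and eq: "phi p = phi q"
  show "p = q"
  proof (rule PiE_ext[OF p q])
    fix i assume i: "i \<in> {1..r}"
    show "p i = q i"
    proof
      show "p i \<subseteq> q i"
      proof
        fix e assume "e \<in> p i"
        then have "i \<in> phi p e" using i by (simp add: phi_def)
        then have "i \<in> phi q e" using eq by simp
        then show "e \<in> q i" by (simp add: phi_def)
      qed
      show "q i \<subseteq> p i"
      proof
        fix e assume "e \<in> q i"
        then have "i \<in> phi q e" using i by (simp add: phi_def)
        then have "i \<in> phi p e" using eq by simp
        then show "e \<in> p i" by (simp add: phi_def)
      qed
    qed
  qed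
qed

definition MM :: "('e \<Rightarrow> nat) set" where
  "MM = {m. weblike r G m \<and> (\<forall>j \<in> {1..nbd G}. web_degree G m j = lam j)}"

definition LL :: "('e \<Rightarrow> nat) \<Rightarrow> ('e \<Rightarrow> nat set) set" where
  "LL m = {L. consistent_labeling r G m L
      \<and> (\<forall>j \<in> {1..nbd G}. (\<Union>e \<in> inc_edges G (bdry G j). L e) = S j)}"

lemma finMM: "finite MM"
proof -
  have "MM \<subseteq> (\<lambda>f e. if e \<in> edges G then f e else 0) ` PiE (edges G) (\<lambda>_. {..r})"
  proof
    fix m assume m: "m \<in> MM"
    then have w: "weblike r G m" by (simp add: MM_def)
    have "m = (\<lambda>e. if e \<in> edges G then restrict m (edges G) e else 0)"
      using w by (auto simp: weblike_def)
    moreover have "restrict m (edges G) \<in> PiE (edges G) (\<lambda>_. {..r})"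
      using w by (auto simp: weblike_def)
    ultimately show "m \<in> (\<lambda>f e. if e \<in> edges G then f e else 0) ` PiE (edges G) (\<lambda>_. {..r})"
      by blast
  qed
  moreover have "finite (PiE (edges G) (\<lambda>_. {..r::nat}))" by (rule finite_PiE[OF finE]) simp
  ultimately show ?thesis using finite_subset by blast
qed

lemma finAA: "finite (AA i)"
proof -
  have "AA i \<subseteq> Pow (edges G)" by (auto simp: AA_def almost_pm_def)
  then show ?thesis using finE finite_subset by blast
qed

lemma LL_eq:
  assumes m: "m \<in> MM"
  shows "LL m = {L \<in> phi ` PiE {1..r} AA. (\<lambda>e. card (L e)) = m}"
proof
  have wl: "weblike r G m" using m by (simp add: MM_def)
  show "LL m \<subseteq> {L \<in> phi ` PiE {1..r} AA. (\<lambda>e. card (L e)) = m}"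
  proof
    fix L assume L: "L \<in> LL m"
    have cl: "consistent_labeling r G m L" and bd: "\<forall>j \<in> {1..nbd G}. (\<Union>e \<in> inc_edges G (bdry G j). L e) = S j"
      using L by (auto simp: LL_def)
    define p where "p = (\<lambda>i \<in> {1..r}. {e \<in> edges G. i \<in> L e})"
    have "p \<in> PiE {1..r} AA" "phi p = L" using lab_to_match[OF wl cl bd] by (simp_all add: p_def)
    moreover have "(\<lambda>e. card (L e)) = m"
    proof
      fix e show "card (L e) = m e"
        using cl wl by (cases "e \<in> edges G") (auto simp: consistent_labeling_def weblike_def)
    qed
    ultimately show "L \<in> {L \<in> phi ` PiE {1..r} AA. (\<lambda>e. card (L e)) = m}" by blast
  qed
  show "{L \<in> phi ` PiE {1..r} AA. (\<lambda>e. card (L e)) = m} \<subseteq> LL m"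
  proof
    fix L assume "L \<in> {L \<in> phi ` PiE {1..r} AA. (\<lambda>e. card (L e)) = m}"
    then obtain p where p: "p \<in> PiE {1..r} AA" and L: "L = phi p" and c: "(\<lambda>e. card (L e)) = m" by blast
    have "consistent_labeling r G (\<lambda>e. card (phi p e)) (phi p)"
      "\<forall>j \<in> {1..nbd G}. (\<Union>e \<in> inc_edges G (bdry G j). phi p e) = S j"
      using match_to_lab[OF p] by blast+
    then show "L \<in> LL m" using L c by (simp add: LL_def)
  qed
qed

lemma img_MM: "(\<lambda>L e. card (L e)) ` (phi ` PiE {1..r} AA) \<subseteq> MM"
  using match_to_lab by (auto simp: MM_def)

lemma main_ctx:
  "(\<Prod>i = 1..r. Delta G wt (dual_list (nbd G) S i))
           = sign_labels (nbd G) S * Web_eval r G wt lam S"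
proof -
  let ?P = "PiE {1..r} AA"
  let ?F = "\<lambda>L. \<Prod>e\<in>edges G. wt e ^ card (L e)"
  have "(\<Prod>i = 1..r. Delta G wt (dual_list (nbd G) S i)) = (\<Prod>i\<in>{1..r}. \<Sum>\<pi>\<in>AA i. \<Prod>e\<in>\<pi>. wt e)"
    by (simp add: Delta_def AA_def)
  also have "\<dots> = (\<Sum>p\<in>?P. \<Prod>i\<in>{1..r}. \<Prod>e\<in>p i. wt e)"
    by (rule prod_sum_PiE) (simp_all add: finAA)
  also have "\<dots> = (\<Sum>p\<in>?P. ?F (phi p))" by (rule sum.cong[OF refl], erule weight)
  also have "\<dots> = (\<Sum>L\<in>phi ` ?P. ?F L)" by (subst sum.reindex[OF inj_phi]) (simp add: o_def)
  finally have lhs: "(\<Prod>i = 1..r. Delta G wt (dual_list (nbd G) S i)) = (\<Sum>L\<in>phi ` ?P. ?F L)" .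
  have sg: "sign_labels (nbd G) S * sign_labels (nbd G) S = 1"
    by (simp add: sign_labels_def power_mult_distrib[symmetric])
  have "sign_labels (nbd G) S * Web_eval r G wt lam S = (\<Sum>m\<in>MM. web_wt G wt m * of_nat (card (LL m)))"
    unfolding Web_eval_def web_inv_value_def sum_distrib_left
    by (rule sum.cong) (auto simp: MM_def a_count_def LL_def sg mult.left_commute[of "sign_labels _ _"] mult.assoc[symmetric])
  also have "\<dots> = (\<Sum>m\<in>MM. \<Sum>L\<in>{L \<in> phi ` ?P. (\<lambda>e. card (L e)) = m}. ?F L)"
  proof (rule sum.cong[OF refl])
    fix m assume m: "m \<in> MM"
    have "(\<Sum>L\<in>{L \<in> phi ` ?P. (\<lambda>e. card (L e)) = m}. ?F L) = (\<Sum>L\<in>{L \<in> phi ` ?P. (\<lambda>e. card (L e)) = m}. web_wt G wt m)"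
      by (rule sum.cong[OF refl]) (auto simp: web_wt_def)
    also have "\<dots> = web_wt G wt m * of_nat (card (LL m))" using LL_eq[OF m] by simp
    finally show "web_wt G wt m * of_nat (card (LL m)) = (\<Sum>L\<in>{L \<in> phi ` ?P. (\<lambda>e. card (L e)) = m}. ?F L)" by simp
  qed
  also have "\<dots> = (\<Sum>L\<in>phi ` ?P. ?F L)"
    by (rule sum.group[OF _ finMM img_MM]) (simp add: finAA finite_PiE)
  finally show ?thesis using lhs by simp
qed

end

theorem mainTheorem3:
  fixes G :: "('v, 'e) bgraph" and wt :: "'e \<Rightarrow> complex"
    and r k :: nat and lam :: "nat \<Rightarrow> nat" and S :: "nat \<Rightarrow> nat set"
  assumes "network G wt"
    and "excedance G = int k"
    and "r \<ge> 1"
    and "\<forall>j \<in> {1..nbd G}. lam j \<le> r"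
    and "(\<Sum>j = 1..nbd G. lam j) = k * r"
    and "boundary_labels (nbd G) r k lam S"
  shows "(\<Prod>i = 1..r. Delta G wt (dual_list (nbd G) S i))
           = sign_labels (nbd G) S * Web_eval r G wt lam S"
  using main_ctx[OF assms(1) assms(6)] .

end
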